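(* Let $n\ge 2$, $F$ the free group on $g_1,\dots,g_n$, $F^{(1)}=[F,F]$, $F^{(2)}=[F^{(1)},F^{(1)}]$, and let $w\in F^{(1)}\setminus F^{(2)}$. Let $K$ be a field of characteristic $0$. Then for every unipotent matrix $X\in\mathrm{SL}(2,K)$ there exists a group homomorphism $\psi:F\to\mathrm{SL}(2,K)$ with $\psi(w)=X$; equivalently, there exist $Z_1,\dots,Z_n\in\mathrm{SL}(2,K)$ with $w(Z_1,\dots,Z_n)=X$.
   Context: A matrix $X\in\mathrm{SL}(2,K)$ is unipotent if $X-I$ is nilpotent (the identity included). $w(Z_1,\dots,Z_n)$ is the value of the word map of $w$, obtained by substituting $Z_i$ for $g_i$. *)

theory Defs
  imports "HOL-Analysis.Analysis" "HOL-Algebra.Generated_Groups"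
begin

text \<open>Letters of the free group on generators g_0,...,g_(n-1): (i, False) is g_i,
  (i, True) is g_i inverse.  Elements of the free group are freely reduced words.\<close>

type_synonym letter = "nat \<times> bool"

definition cancels :: "letter \<Rightarrow> letter \<Rightarrow> bool" where
  "cancels x y \<longleftrightarrow> fst x = fst y \<and> snd x \<noteq> snd y"

fun freely_reduced :: "letter list \<Rightarrow> bool" where
  "freely_reduced [] = True"
| "freely_reduced [x] = True"
| "freely_reduced (x # y # ys) = (\<not> cancels x y \<and> freely_reduced (y # ys))"

fun reduce :: "letter list \<Rightarrow> letter list" where
  "reduce [] = []"
| "reduce (x # xs) = (case reduce xs of [] \<Rightarrow> [x]
     | y # ys \<Rightarrow> (if cancels x y then ys else x # y # ys))"

definition free_grp :: "nat \<Rightarrow> letter list monoid" where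
  "free_grp n = \<lparr> carrier = {w. freely_reduced w \<and> (\<forall>x\<in>set w. fst x < n)},
                  mult = (\<lambda>u v. reduce (u @ v)),
                  one = [] \<rparr>"

definition SL2 :: "('a::field ^ 2 ^ 2) set" where
  "SL2 = {A. det A = 1}"

definition unipotent :: "'a::field ^ 2 ^ 2 \<Rightarrow> bool" where
  "unipotent X \<longleftrightarrow> (\<exists>k. ((\<lambda>M. (X - mat 1) ** M) ^^ k) (mat 1) = 0)"

definition word_map :: "letter list \<Rightarrow> (nat \<Rightarrow> 'a::field ^ 2 ^ 2) \<Rightarrow> 'a ^ 2 ^ 2" where
  "word_map w Z = foldr (\<lambda>x M. (if snd x then matrix_inv (Z (fst x)) else Z (fst x)) ** M) w (mat 1)"

end

theory Submission
  imports Defs "HOL-Library.Function_Algebras" "HOL-Computational_Algebra.Polynomial"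
begin


definition cr :: "letter \<Rightarrow> letter list \<Rightarrow> letter list" where
  "cr x ys = (case ys of [] \<Rightarrow> [x] | y # ys' \<Rightarrow> (if cancels x y then ys' else x # y # ys'))"

lemma reduce_Cons: "reduce (x # xs) = cr x (reduce xs)"
  by (simp add: cr_def)

lemma reduce_append: "reduce (u @ v) = foldr cr u (reduce v)"
  by (induction u) (simp_all del: reduce.simps add: reduce_Cons)

lemma cr_red: "freely_reduced ys \<Longrightarrow> freely_reduced (cr x ys)"
  by (cases ys rule: freely_reduced.cases) (auto simp: cr_def)

lemma foldr_cr_red: "freely_reduced r \<Longrightarrow> freely_reduced (foldr cr u r)"
  by (induction u) (auto simp: cr_red)

lemma reduce_red: "freely_reduced (reduce u)"
  using foldr_cr_red[of "[]" u] reduce_append[of u "[]"] by simp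

lemma reduce_id: "freely_reduced u \<Longrightarrow> reduce u = u"
  by (induction u rule: freely_reduced.induct) (auto simp: cr_def)

lemma cancels_trans: "cancels x y \<Longrightarrow> cancels y z \<Longrightarrow> x = z"
  by (cases x; cases y; cases z) (auto simp: cancels_def)


lemma cr_cancel: assumes that: "freely_reduced ys" "cancels x y" shows "cr x (cr y ys) = ys"
proof (cases ys rule: freely_reduced.cases)
  case 1
  then show ?thesis using that by (simp add: cr_def)
next
  case (2 z)
  then show ?thesis using that cancels_trans[of x y z] by (simp add: cr_def)
next
  case (3 z z' zs)
  then show ?thesis using that cancels_trans[of x y z] by (simp add: cr_def)
qed

lemma foldr_cr_cr: "freely_reduced s \<Longrightarrow> freely_reduced r \<Longrightarrow>
  foldr cr (cr x s) r = cr x (foldr cr s r)"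
proof (cases s)
  case Nil then show ?thesis by (simp add: cr_def)
next
  case (Cons y s')
  assume "freely_reduced s" "freely_reduced r"
  show ?thesis
  proof (cases "cancels x y")
    case True
    have "freely_reduced (foldr cr s' r)"
      using foldr_cr_red \<open>freely_reduced r\<close> by blast
    then show ?thesis using True Cons cr_cancel by (simp add: cr_def)
  next
    case False then show ?thesis using Cons by (simp add: cr_def)
  qed
qed

lemma foldr_cr_reduce: "freely_reduced r \<Longrightarrow> foldr cr (reduce u) r = foldr cr u r"
proof (induction u)
  case Nil then show ?case by simp
next
  case (Cons x u)
  then show ?case using foldr_cr_cr[OF reduce_red Cons.prems, of x u]
    by (simp del: reduce.simps add: reduce_Cons)
qed

lemma reduce_reduce_left: "reduce (reduce u @ v) = reduce (u @ v)"
  by (simp del: reduce.simps add: reduce_append foldr_cr_reduce reduce_red)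

lemma reduce_reduce_right: "reduce (u @ reduce v) = reduce (u @ v)"
  by (simp del: reduce.simps add: reduce_append reduce_id reduce_red)

lemma set_cr: "set (cr x ys) \<subseteq> insert x (set ys)"
  by (auto simp: cr_def split: list.splits)

lemma set_reduce: "set (reduce u) \<subseteq> set u"
proof (induction u)
  case Nil then show ?case by simp
next
  case (Cons x u) then show ?case using set_cr[of x "reduce u"]
    by (simp del: reduce.simps add: reduce_Cons) blast
qed


definition flip :: "letter \<Rightarrow> letter" where "flip x = (fst x, \<not> snd x)"
definition inv_w :: "letter list \<Rightarrow> letter list" where "inv_w u = rev (map flip u)"

lemma cancels_flip: "cancels x (flip x)" "cancels (flip x) x"
  by (auto simp: cancels_def flip_def)

lemma foldr_inv: "freely_reduced r \<Longrightarrow> foldr cr u (foldr cr (inv_w u) r) = r"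
proof (induction u arbitrary: r)
  case Nil then show ?case by (simp add: inv_w_def)
next
  case (Cons x u)
  have "foldr cr (inv_w (x # u)) r = foldr cr (inv_w u) (cr (flip x) r)"
    by (simp add: inv_w_def)
  moreover have "foldr cr u (foldr cr (inv_w u) (cr (flip x) r)) = cr (flip x) r"
    using Cons cr_red by blast
  ultimately show ?case using Cons.prems cr_cancel cancels_flip by simp
qed

lemma inv_w_inv_w: "inv_w (inv_w u) = u"
  by (simp add: inv_w_def rev_map flip_def o_def)

lemma reduce_inv_right: "reduce (u @ inv_w u) = []"
  using foldr_inv[of "[]" u] reduce_append[of "inv_w u" "[]"] by (simp del: reduce.simps add: reduce_append reduce.simps(1))

lemma reduce_inv_left: "reduce (inv_w u @ u) = []"
  using reduce_inv_right[of "inv_w u"] by (simp add: inv_w_inv_w)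

lemma set_inv_w: "fst ` set (inv_w u) = fst ` set u"
  by (force simp: inv_w_def flip_def)

lemma free_carrier: "carrier (free_grp n) = {w. freely_reduced w \<and> (\<forall>x\<in>set w. fst x < n)}"
  and free_mult: "mult (free_grp n) u v = reduce (u @ v)"
  and free_one: "one (free_grp n) = []"
  by (simp_all add: free_grp_def)

lemma reduce_carrier: "\<forall>x\<in>set u. fst x < n \<Longrightarrow> reduce u \<in> carrier (free_grp n)"
  using set_reduce[of u] by (auto simp: free_carrier reduce_red)

lemma free_group: "group (free_grp n)"
proof (rule groupI)
  fix x y assume "x \<in> carrier (free_grp n)" "y \<in> carrier (free_grp n)"
  then show "x \<otimes>\<^bsub>free_grp n\<^esub> y \<in> carrier (free_grp n)"
    unfolding free_mult by (intro reduce_carrier) (auto simp: free_carrier)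
next
  show "\<one>\<^bsub>free_grp n\<^esub> \<in> carrier (free_grp n)" by (simp add: free_carrier free_one)
next
  fix x y z
  show "x \<otimes>\<^bsub>free_grp n\<^esub> y \<otimes>\<^bsub>free_grp n\<^esub> z = x \<otimes>\<^bsub>free_grp n\<^esub> (y \<otimes>\<^bsub>free_grp n\<^esub> z)"
    by (simp add: free_mult reduce_reduce_left reduce_reduce_right)
next
  fix x assume "x \<in> carrier (free_grp n)"
  then show "\<one>\<^bsub>free_grp n\<^esub> \<otimes>\<^bsub>free_grp n\<^esub> x = x"
    by (simp add: free_carrier free_mult free_one reduce_id)
next
  fix x assume x: "x \<in> carrier (free_grp n)"
  show "\<exists>y\<in>carrier (free_grp n). y \<otimes>\<^bsub>free_grp n\<^esub> x = \<one>\<^bsub>free_grp n\<^esub>"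
  proof (intro bexI)
    show "reduce (inv_w x) \<otimes>\<^bsub>free_grp n\<^esub> x = \<one>\<^bsub>free_grp n\<^esub>"
      by (simp add: free_mult free_one reduce_reduce_left reduce_inv_left)
    show "reduce (inv_w x) \<in> carrier (free_grp n)"
      using x set_inv_w[of x] by (intro reduce_carrier) (force simp: free_carrier)
  qed
qed

lemma free_inv: assumes "x \<in> carrier (free_grp n)"
  shows "inv\<^bsub>free_grp n\<^esub> x = reduce (inv_w x)"
proof -
  interpret group "free_grp n" by (rule free_group)
  have c: "reduce (inv_w x) \<in> carrier (free_grp n)"
    using assms set_inv_w[of x] by (intro reduce_carrier) (force simp: free_carrier)
  show ?thesis
    by (rule inv_equality) (simp_all add: assms c free_mult free_one reduce_reduce_left reduce_inv_left)
qed




definition prodL :: "('a,'b) monoid_scheme \<Rightarrow> ('a \<times> bool) list \<Rightarrow> 'a" where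
  "prodL G L = foldr (\<lambda>p acc. (if snd p then inv\<^bsub>G\<^esub> (fst p) else fst p) \<otimes>\<^bsub>G\<^esub> acc) L \<one>\<^bsub>G\<^esub>"

definition bal :: "('a \<times> bool) list \<Rightarrow> bool" where
  "bal L \<longleftrightarrow> mset (map fst (filter snd L)) = mset (map fst (filter (\<lambda>p. \<not> snd p) L))"

lemma prodL_Nil[simp]: "prodL G [] = \<one>\<^bsub>G\<^esub>"
  and prodL_Cons: "prodL G (p # L) = (if snd p then inv\<^bsub>G\<^esub> (fst p) else fst p) \<otimes>\<^bsub>G\<^esub> prodL G L"
  by (simp_all add: prodL_def)

lemma bal_map: "bal L \<Longrightarrow> bal (map (apfst f) L)"
proof -
  assume "bal L"
  have "mset (map fst (filter snd (map (apfst f) L))) = image_mset f (mset (map fst (filter snd L)))"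
    by (induction L) auto
  moreover have "mset (map fst (filter (\<lambda>p. \<not> snd p) (map (apfst f) L))) =
     image_mset f (mset (map fst (filter (\<lambda>p. \<not> snd p) L)))"
    by (induction L) auto
  ultimately show ?thesis using \<open>bal L\<close> unfolding bal_def by simp
qed

context group begin

lemma prodL_closed: "subgroup H G \<Longrightarrow> set (map fst L) \<subseteq> H \<Longrightarrow> prodL G L \<in> H"
  by (induction L) (auto simp: prodL_Cons subgroup.one_closed subgroup.m_closed subgroup.m_inv_closed)

lemma prodL_append: "set (map fst L1) \<subseteq> carrier G \<Longrightarrow> set (map fst L2) \<subseteq> carrier G \<Longrightarrow>
   prodL G (L1 @ L2) = prodL G L1 \<otimes> prodL G L2"
proof (induction L1)
  case Nil then show ?case using prodL_closed[OF subgroup_self, of L2] by simp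
next
  case (Cons p L1)
  then show ?case using prodL_closed[OF subgroup_self, of L1] prodL_closed[OF subgroup_self, of L2]
    by (simp add: prodL_Cons m_assoc)
qed

lemma bal_prod:
  assumes H: "subgroup H G" and L: "set (map fst L) \<subseteq> H" and b: "bal L"
  shows "prodL G L \<in> derived G H"
  using L b
proof (induction "length L" arbitrary: L rule: less_induct)
  case less
  have HG: "H \<subseteq> carrier G" using H subgroup.subset by blast
  have DS: "subgroup (derived G H) G" using derived_is_subgroup[OF HG] .
  show ?case
  proof (cases L)
    case Nil then show ?thesis by (simp add: derived_def generate.one)
  next
    case (Cons p R)
    obtain y s where p: "p = (y, s)" by (cases p)
    have "(y, \<not> s) \<in> set R"
    proof (cases s)
      case True
      then have "y \<in># mset (map fst (filter (\<lambda>p. \<not> snd p) R))"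
        using less.prems(2) Cons p unfolding bal_def by (metis filter.simps(2) fst_conv list.simps(9) mset.simps(2) snd_conv union_single_eq_member)
      then show ?thesis using True by auto
    next
      case False
      then have "y \<in># mset (map fst (filter snd R))"
        using less.prems(2) Cons p unfolding bal_def by (metis filter.simps(2) fst_conv list.simps(9) mset.simps(2) snd_conv union_single_eq_member)
      then show ?thesis using False by auto
    qed
    then obtain R1 R2 where R: "R = R1 @ (y, \<not> s) # R2" by (meson split_list)
    have bal': "bal (R1 @ R2)"
      using less.prems(2) unfolding bal_def Cons p R by (cases s) auto
    have sub: "set (map fst (R1 @ R2)) \<subseteq> H" using less.prems(1) Cons R by auto
    have IH: "prodL G (R1 @ R2) \<in> derived G H"
      using less.hyps[OF _ sub bal'] Cons R by simp
    have yH: "y \<in> H" using less.prems(1) Cons p by auto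
    define y' where "y' = (if s then inv y else y)"
    have y'H: "y' \<in> H" using yH H by (simp add: y'_def subgroup.m_inv_closed)
    have y'': "(if \<not> s then inv y else y) = inv y'"
      using yH HG by (auto simp: y'_def)
    have R1H: "set (map fst R1) \<subseteq> H" and R2H: "set (map fst R2) \<subseteq> H"
      using sub by auto
    define P1 where "P1 = prodL G R1"
    define P2 where "P2 = prodL G R2"
    have P1H: "P1 \<in> H" using prodL_closed[OF H R1H] by (simp add: P1_def)
    have P2H: "P2 \<in> H" using prodL_closed[OF H R2H] by (simp add: P2_def)
    have c: "y' \<in> carrier G" "P1 \<in> carrier G" "P2 \<in> carrier G"
      using y'H P1H P2H HG by auto
    have eq1: "prodL G L = y' \<otimes> (P1 \<otimes> (inv y' \<otimes> P2))"
    proof -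
      have a: "prodL G L = y' \<otimes> prodL G R" by (simp add: Cons p prodL_Cons y'_def)
      have b: "prodL G ((y, \<not> s) # R2) = inv y' \<otimes> P2"
        using y'' unfolding prodL_Cons P2_def by (cases s) auto
      have "prodL G R = P1 \<otimes> prodL G ((y, \<not> s) # R2)"
        unfolding R P1_def using R1H R2H HG yH by (intro prodL_append) auto
      then show ?thesis using a b by simp
    qed
    have eq2: "prodL G (R1 @ R2) = P1 \<otimes> P2"
      using R1H R2H HG by (simp add: prodL_append P1_def P2_def)
    have eq3: "y' \<otimes> (P1 \<otimes> (inv y' \<otimes> P2)) = (y' \<otimes> P1 \<otimes> inv y' \<otimes> inv P1) \<otimes> (P1 \<otimes> P2)"
    proof -
      have "inv P1 \<otimes> (P1 \<otimes> P2) = P2" using c by (simp add: m_assoc[symmetric])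
      then show ?thesis using c by (simp add: m_assoc)
    qed
    have comm: "y' \<otimes> P1 \<otimes> inv y' \<otimes> inv P1 \<in> derived G H"
      unfolding derived_def using y'H P1H by (intro generate.incl) blast
    show ?thesis
      using eq1 eq3 eq2 IH comm subgroup.m_closed[OF DS] by metis
  qed
qed

end




definition ev :: "letter \<Rightarrow> nat \<Rightarrow> int" where
  "ev x = (\<lambda>j. if fst x = j then (if snd x then -1 else 1) else 0)"

definition sig :: "letter list \<Rightarrow> nat \<Rightarrow> int" where
  "sig u = (\<lambda>j. int (count (mset (map fst (filter (\<lambda>p. \<not> snd p) u))) j)
               - int (count (mset (map fst (filter snd u))) j))"

lemma sig_Nil[simp]: "sig [] = 0"
  by (simp add: sig_def fun_eq_iff)

lemma sig_Cons: "sig (x # u) = ev x + sig u"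
  by (cases x) (auto simp: sig_def ev_def fun_eq_iff)

lemma sig_append: "sig (u @ v) = sig u + sig v"
  by (induction u) (simp_all add: sig_Cons algebra_simps)

lemma ev_flip: "ev (flip x) = - ev x"
  by (auto simp: ev_def flip_def fun_eq_iff)

lemma ev_cancel: "cancels x y \<Longrightarrow> ev x + ev y = 0"
  by (cases x; cases y) (auto simp: ev_def cancels_def fun_eq_iff)

lemma sig_cr: "sig (cr x ys) = ev x + sig ys"
  by (auto simp: cr_def sig_Cons ev_cancel add.assoc[symmetric] split: list.splits)

lemma sig_reduce: "sig (reduce u) = sig u"
  by (induction u) (simp_all del: reduce.simps add: reduce_Cons sig_cr sig_Cons reduce.simps(1))

lemma sig_inv_w: "sig (inv_w u) = - sig u"
  by (induction u) (simp_all add: inv_w_def sig_append sig_Cons ev_flip fun_eq_iff)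

lemma bal_sig: "bal u \<longleftrightarrow> sig u = 0"
  unfolding bal_def sig_def fun_eq_iff by (simp add: multiset_eq_iff) (metis)

lemma free_sig_mult: "sig (u \<otimes>\<^bsub>free_grp n\<^esub> v) = sig u + sig v"
  by (simp add: free_mult sig_reduce sig_append)

lemma free_sig_inv: "u \<in> carrier (free_grp n) \<Longrightarrow> sig (inv\<^bsub>free_grp n\<^esub> u) = - sig u"
  by (simp add: free_inv sig_reduce sig_inv_w)

lemma derived_sig:
  assumes "w \<in> derived (free_grp n) (carrier (free_grp n))"
  shows "sig w = 0"
proof -
  interpret group "free_grp n" by (rule free_group)
  define Z where "Z = {u \<in> carrier (free_grp n). sig u = 0}"
  have "subgroup Z (free_grp n)"
  proof
    show "Z \<subseteq> carrier (free_grp n)" by (auto simp: Z_def)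
    show "\<one>\<^bsub>free_grp n\<^esub> \<in> Z" by (simp add: Z_def free_one free_carrier)
    fix x y assume "x \<in> Z" "y \<in> Z"
    then show "x \<otimes>\<^bsub>free_grp n\<^esub> y \<in> Z" by (simp add: Z_def free_sig_mult)
  next
    fix x assume "x \<in> Z" then show "inv\<^bsub>free_grp n\<^esub> x \<in> Z" by (simp add: Z_def free_sig_inv)
  qed
  moreover have "derived_set (free_grp n) (carrier (free_grp n)) \<subseteq> Z"
    by (auto simp: Z_def free_sig_mult free_sig_inv)
  ultimately have "derived (free_grp n) (carrier (free_grp n)) \<subseteq> Z"
    unfolding derived_def by (rule generate_subgroup_incl[rotated])
  then show ?thesis using assms by (auto simp: Z_def)
qed

lemma gen_carrier: "j < n \<Longrightarrow> [(j, b)] \<in> carrier (free_grp n)"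
  by (simp add: free_carrier)

lemma gen_inv: "j < n \<Longrightarrow> inv\<^bsub>free_grp n\<^esub> [(j, False)] = [(j, True)]"
  by (simp add: free_inv gen_carrier inv_w_def flip_def cr_def)

lemma prodL_letters:
  assumes "\<forall>x\<in>set u. fst x < n"
  shows "prodL (free_grp n) (map (apfst (\<lambda>j. [(j, False)])) u) = reduce u"
  using assms
proof (induction u)
  case Nil then show ?case by (simp add: free_one)
next
  case (Cons x u)
  obtain j b where x: "x = (j, b)" by (cases x)
  have eqx: "(if b then inv\<^bsub>free_grp n\<^esub> [(j, False)] else [(j, False)]) = [x]"
    using Cons.prems x gen_inv by auto
  have "prodL (free_grp n) (map (apfst (\<lambda>j. [(j, False)])) (x # u)) = [x] \<otimes>\<^bsub>free_grp n\<^esub> reduce u"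
    unfolding x list.map apfst_conv prodL_Cons fst_conv snd_conv eqx[unfolded x] Cons.IH[OF conjunct2[OF Cons.prems[simplified]]] ..
  then have "prodL (free_grp n) (map (apfst (\<lambda>j. [(j, False)])) (x # u)) = reduce ([x] @ reduce u)"
    by (simp add: free_mult del: reduce.simps)
  then show ?case by (simp only: reduce_reduce_right) simp
qed

lemma sig_zero_derived:
  assumes "u \<in> carrier (free_grp n)" "sig u = 0"
  shows "u \<in> derived (free_grp n) (carrier (free_grp n))"
proof -
  interpret group "free_grp n" by (rule free_group)
  have l: "\<forall>x\<in>set u. fst x < n" "freely_reduced u" using assms(1) by (auto simp: free_carrier)
  have "bal (map (apfst (\<lambda>j. [(j, False)])) u)"
    using assms(2) bal_sig bal_map by blast
  moreover have "set (map fst (map (apfst (\<lambda>j. [(j, False)])) u)) \<subseteq> carrier (free_grp n)"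
    using l gen_carrier by auto
  ultimately have "prodL (free_grp n) (map (apfst (\<lambda>j. [(j, False)])) u) \<in> derived (free_grp n) (carrier (free_grp n))"
    by (intro bal_prod subgroup_self)
  then show ?thesis using prodL_letters[OF l(1)] reduce_id[OF l(2)] by simp
qed




definition hraw :: "nat \<Rightarrow> (nat \<Rightarrow> int) \<Rightarrow> letter list" where
  "hraw m p = concat (map (\<lambda>j. replicate (nat \<bar>p j\<bar>) (j, p j < 0)) [0..<m])"

definition hh :: "nat \<Rightarrow> (nat \<Rightarrow> int) \<Rightarrow> letter list" where
  "hh n p = reduce (hraw n p)"

lemma sig_replicate: "sig (replicate k x) = (\<lambda>j. int k * ev x j)"
  by (induction k) (auto simp: sig_Cons fun_eq_iff algebra_simps)

lemma sig_hraw: "sig (hraw m p) = (\<lambda>j. if j < m then p j else 0)"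
proof (induction m)
  case 0 then show ?case by (simp add: hraw_def fun_eq_iff)
next
  case (Suc m)
  have "hraw (Suc m) p = hraw m p @ replicate (nat \<bar>p m\<bar>) (m, p m < 0)"
    by (simp add: hraw_def)
  then show ?case using Suc by (auto simp: sig_append sig_replicate ev_def fun_eq_iff less_Suc_eq)
qed

lemma hraw_letters: "\<forall>x\<in>set (hraw m p). fst x < m"
  by (auto simp: hraw_def)

lemma hh_carrier: "hh n p \<in> carrier (free_grp n)"
  unfolding hh_def using hraw_letters by (intro reduce_carrier) blast

lemma sig_hh: "sig (hh n p) = (\<lambda>j. if j < n then p j else 0)"
  by (simp add: hh_def sig_reduce sig_hraw)

lemma hh_zero: "hh n 0 = []"
proof -
  have "concat (map (\<lambda>j. replicate (nat \<bar>(0::nat\<Rightarrow>int) j\<bar>) (j, (0::nat\<Rightarrow>int) j < 0)) xs) = []" for xs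
    by (induction xs) simp_all
  then show ?thesis unfolding hh_def hraw_def by (simp only: reduce.simps(1))
qed

definition ee :: "nat \<Rightarrow> (nat \<Rightarrow> int) \<Rightarrow> nat \<Rightarrow> letter list" where
  "ee n q i = hh n (- q - ev (i, False)) \<otimes>\<^bsub>free_grp n\<^esub> [(i, False)] \<otimes>\<^bsub>free_grp n\<^esub> inv\<^bsub>free_grp n\<^esub> hh n (- q)"

definition supp :: "nat \<Rightarrow> (nat \<Rightarrow> int) \<Rightarrow> bool" where
  "supp n q \<longleftrightarrow> (\<forall>j\<ge>n. q j = 0)"

lemma ee_carrier: "i < n \<Longrightarrow> ee n q i \<in> carrier (free_grp n)"
proof -
  assume "i < n"
  interpret group "free_grp n" by (rule free_group)
  show ?thesis unfolding ee_def using hh_carrier gen_carrier[OF \<open>i < n\<close>] by simp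
qed

lemma ee_derived:
  assumes "i < n" "supp n q"
  shows "ee n q i \<in> derived (free_grp n) (carrier (free_grp n))"
proof (rule sig_zero_derived[OF ee_carrier[OF assms(1)]])
  show "sig (ee n q i) = 0"
    using assms unfolding ee_def
    by (simp add: free_sig_mult free_sig_inv hh_carrier sig_hh fun_eq_iff supp_def ev_def sig_Cons)
qed

fun items :: "letter list \<Rightarrow> (((nat \<Rightarrow> int) \<times> nat) \<times> bool) list" where
  "items [] = []"
| "items (x # u) = (if snd x then ((sig u - ev (fst x, False), fst x), True)
                    else ((sig u, fst x), False)) # items u"

lemma sig_supp: "\<forall>x\<in>set u. fst x < n \<Longrightarrow> supp n (sig u)"
  by (induction u) (auto simp: supp_def sig_Cons ev_def)

lemma items_supp: "\<forall>x\<in>set u. fst x < n \<Longrightarrow> ((q, i), s) \<in> set (items u) \<Longrightarrow> i < n \<and> supp n q"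
proof (induction u)
  case Nil then show ?case by simp
next
  case (Cons x u)
  have "supp n (sig u)" using Cons.prems sig_supp by simp
  moreover have "fst x < n" using Cons.prems by simp
  ultimately show ?case using Cons
    by (auto simp: supp_def ev_def split: if_splits)
qed


lemma (in group) tele1:
  assumes "a \<in> carrier G" "g \<in> carrier G" "c \<in> carrier G" "r \<in> carrier G"
  shows "(a \<otimes> g \<otimes> inv c) \<otimes> (c \<otimes> r) = a \<otimes> (g \<otimes> r)"
proof -
  have "inv c \<otimes> (c \<otimes> r) = r" using assms by (simp add: m_assoc[symmetric])
  then show ?thesis using assms by (simp add: m_assoc)
qed

lemma (in group) tele2:
  assumes "a \<in> carrier G" "g \<in> carrier G" "c \<in> carrier G" "r \<in> carrier G"
  shows "inv (a \<otimes> g \<otimes> inv c) \<otimes> (a \<otimes> r) = c \<otimes> (inv g \<otimes> r)"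
proof -
  have "inv (a \<otimes> g \<otimes> inv c) = c \<otimes> inv g \<otimes> inv a" using assms by (simp add: inv_mult_group m_assoc)
  moreover have "inv a \<otimes> (a \<otimes> r) = r" using assms by (simp add: m_assoc[symmetric])
  ultimately show ?thesis using assms by (simp add: m_assoc)
qed

lemma items_prod:
  assumes "\<forall>x\<in>set u. fst x < n"
  shows "prodL (free_grp n) (map (apfst (\<lambda>(q,i). ee n q i)) (items u)) = hh n (- sig u) \<otimes>\<^bsub>free_grp n\<^esub> reduce u"
  using assms
proof (induction u)
  case Nil
  interpret group "free_grp n" by (rule free_group)
  have "- sig [] = (0::nat\<Rightarrow>int)" by simp
  then show ?case using hh_zero[of n, unfolded zero_fun_def] by (simp add: free_mult free_one del: reduce.simps add: reduce.simps(1))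
next
  case (Cons x u)
  interpret group "free_grp n" by (rule free_group)
  obtain i b where x: "x = (i, b)" by (cases x)
  have i: "i < n" and u: "\<forall>x\<in>set u. fst x < n" using Cons.prems x by auto
  have r: "reduce u \<in> carrier (free_grp n)" using u by (rule reduce_carrier)
  have IH: "prodL (free_grp n) (map (apfst (\<lambda>(q,i). ee n q i)) (items u)) = hh n (- sig u) \<otimes>\<^bsub>free_grp n\<^esub> reduce u"
    by (rule Cons.IH[OF u])
  show ?case
  proof (cases b)
    case False
    have "prodL (free_grp n) (map (apfst (\<lambda>(q,i). ee n q i)) (items (x # u))) =
       ee n (sig u) i \<otimes>\<^bsub>free_grp n\<^esub> (hh n (- sig u) \<otimes>\<^bsub>free_grp n\<^esub> reduce u)"
      using False x IH by (simp add: prodL_Cons)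
    also have "\<dots> = hh n (- sig u - ev (i, False)) \<otimes>\<^bsub>free_grp n\<^esub> ([(i, False)] \<otimes>\<^bsub>free_grp n\<^esub> reduce u)"
      unfolding ee_def by (rule tele1) (simp_all add: hh_carrier gen_carrier i r)
    also have "[(i, False)] \<otimes>\<^bsub>free_grp n\<^esub> reduce u = reduce (x # u)"
      using False x reduce_reduce_right[of "[(i, False)]" u] by (simp add: free_mult del: reduce.simps)
    also have "- sig u - ev (i, False) = - sig (x # u)"
      using False x by (simp add: sig_Cons)
    finally show ?thesis .
  next
    case True
    have "- (sig u - ev (i, False)) - ev (i, False) = - sig u" by simp
    then have "prodL (free_grp n) (map (apfst (\<lambda>(q,i). ee n q i)) (items (x # u))) =
       inv\<^bsub>free_grp n\<^esub> (hh n (- sig u) \<otimes>\<^bsub>free_grp n\<^esub> [(i, False)] \<otimes>\<^bsub>free_grp n\<^esub> inv\<^bsub>free_grp n\<^esub> hh n (- (sig u - ev (i, False))))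
        \<otimes>\<^bsub>free_grp n\<^esub> (hh n (- sig u) \<otimes>\<^bsub>free_grp n\<^esub> reduce u)"
      using True x IH by (simp add: prodL_Cons ee_def)
    also have "\<dots> = hh n (- (sig u - ev (i, False))) \<otimes>\<^bsub>free_grp n\<^esub> (inv\<^bsub>free_grp n\<^esub> [(i, False)] \<otimes>\<^bsub>free_grp n\<^esub> reduce u)"
      by (rule tele2) (simp_all add: hh_carrier gen_carrier i r)
    also have "inv\<^bsub>free_grp n\<^esub> [(i, False)] \<otimes>\<^bsub>free_grp n\<^esub> reduce u = reduce (x # u)"
      using True x reduce_reduce_right[of "[(i, True)]" u] by (simp add: gen_inv i free_mult del: reduce.simps)
    also have "- (sig u - ev (i, False)) = - sig (x # u)"
      using True x by (simp add: sig_Cons ev_def fun_eq_iff)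
    finally show ?thesis .
  qed
qed

lemma key_group:
  assumes w: "w \<in> carrier (free_grp n)"
    and d1: "w \<in> derived (free_grp n) (carrier (free_grp n))"
    and d2: "w \<notin> derived (free_grp n) (derived (free_grp n) (carrier (free_grp n)))"
  shows "\<not> bal (items w)" and "sig w = 0"
proof -
  interpret group "free_grp n" by (rule free_group)
  show s: "sig w = 0" using derived_sig[OF d1] .
  have l: "\<forall>x\<in>set w. fst x < n" "freely_reduced w" using w by (auto simp: free_carrier)
  show "\<not> bal (items w)"
  proof
    assume b: "bal (items w)"
    let ?D = "derived (free_grp n) (carrier (free_grp n))"
    have H: "subgroup ?D (free_grp n)" by (rule derived_is_subgroup) simp
    have "set (map fst (map (apfst (\<lambda>(q,i). ee n q i)) (items w))) \<subseteq> ?D"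
    proof
      fix y assume "y \<in> set (map fst (map (apfst (\<lambda>(q,i). ee n q i)) (items w)))"
      then obtain q i s where "((q, i), s) \<in> set (items w)" "y = ee n q i" by auto
      then show "y \<in> ?D" using items_supp[OF l(1)] ee_derived by blast
    qed
    then have "prodL (free_grp n) (map (apfst (\<lambda>(q,i). ee n q i)) (items w)) \<in> derived (free_grp n) ?D"
      using bal_prod[OF H] bal_map[OF b] by blast
    moreover have "prodL (free_grp n) (map (apfst (\<lambda>(q,i). ee n q i)) (items w)) = w"
    proof -
      have "hh n (- sig w) = []" using s hh_zero by simp
      then show ?thesis using items_prod[OF l(1)] reduce_id[OF l(2)]
        by (simp add: free_mult del: reduce.simps)
    qed
    ultimately show False using d2 by simp
  qed
qed




definition mk :: "'a::zero \<Rightarrow> 'a \<Rightarrow> 'a \<Rightarrow> 'a \<Rightarrow> 'a^2^2" where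
  "mk a b c d = (\<chi> i j. if i = 1 then (if j = 1 then a else b) else (if j = 1 then c else d))"

lemma mk_nth[simp]: "mk a b c d $ 1 $ 1 = a" "mk a b c d $ 1 $ 2 = b" "mk a b c d $ 2 $ 1 = c" "mk a b c d $ 2 $ 2 = d"
  by (simp_all add: mk_def)

lemma mat_eq_2: "(A::'a^2^2) = B \<longleftrightarrow> A$1$1 = B$1$1 \<and> A$1$2 = B$1$2 \<and> A$2$1 = B$2$1 \<and> A$2$2 = B$2$2"
  by (auto simp: vec_eq_iff forall_2)

lemma mk_eta: "(A::'a::zero^2^2) = mk (A$1$1) (A$1$2) (A$2$1) (A$2$2)"
  by (simp add: mat_eq_2)

lemma mk_eq: "mk a b c d = mk a' b' c' d' \<longleftrightarrow> a = a' \<and> b = b' \<and> c = c' \<and> d = d'"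
  by (simp add: mat_eq_2)

lemma mk_mult: "mk a b c d ** mk e f g h = mk (a*e+b*g) (a*f+b*h) (c*e+d*g) (c*f+(d::'a::semiring_1)*h)"
  by (simp add: mat_eq_2 matrix_matrix_mult_def sum_2)

lemma mat1_mk: "(mat 1 :: 'a::zero_neq_one^2^2) = mk 1 0 0 1"
  by (simp add: mat_eq_2 mat_def)

lemma det_mk: "det (mk a b c (d::'a::comm_ring_1)) = a * d - b * c"
  by (simp add: det_2)

lemma matrix_inv_eq:
  fixes A B :: "'a::semiring_1^'n^'n"
  assumes "A ** B = mat 1" "B ** A = mat 1"
  shows "matrix_inv A = B"
proof -
  have ex: "\<exists>A'. A ** A' = mat 1 \<and> A' ** A = mat 1" using assms by blast
  have "A ** matrix_inv A = mat 1 \<and> matrix_inv A ** A = mat 1"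
    unfolding matrix_inv_def by (rule someI_ex[OF ex])
  then have h: "matrix_inv A ** A = mat 1" by blast
  have "matrix_inv A = matrix_inv A ** (A ** B)" by (simp only: assms(1) matrix_mul_rid)
  also have "\<dots> = (matrix_inv A ** A) ** B" by (simp only: matrix_mul_assoc)
  also have "\<dots> = B" by (simp only: h matrix_mul_lid)
  finally show ?thesis .
qed

lemma matrix_inv_mk:
  assumes "a * d - b * c = (1::'a::comm_ring_1)"
  shows "matrix_inv (mk a b c d) = mk d (-b) (-c) a"
proof (rule matrix_inv_eq)
  have e: "a * d = 1 + b * c" "d * a = 1 + c * b" using assms by (simp_all add: algebra_simps)
  show "mk a b c d ** mk d (- b) (- c) a = mat 1"
    by (simp add: mk_mult mat1_mk mk_eq e algebra_simps)
  show "mk d (- b) (- c) a ** mk a b c d = mat 1"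
    by (simp add: mk_mult mat1_mk mk_eq e algebra_simps)
qed

lemma matrix_inv_SL2:
  fixes A :: "'a::field^2^2"
  assumes "A \<in> SL2"
  shows "matrix_inv A = mk (A$2$2) (-(A$1$2)) (-(A$2$1)) (A$1$1)"
proof -
  have eq: "mk (A$1$1) (A$1$2) (A$2$1) (A$2$2) = A" by (simp add: mat_eq_2)
  have det: "A$1$1 * A$2$2 - A$1$2 * A$2$1 = 1" using assms by (simp add: SL2_def det_2)
  from matrix_inv_mk[OF det] show ?thesis unfolding eq .
qed


definition Lf :: "nat \<Rightarrow> (nat \<Rightarrow> nat) \<Rightarrow> (nat \<Rightarrow> int) \<Rightarrow> int" where
  "Lf n D p = (\<Sum>j<n. int (D j) * p j)"

lemma Lf_add: "Lf n D (p + q) = Lf n D p + Lf n D q"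
  by (simp add: Lf_def sum.distrib algebra_simps)

lemma Lf_diff: "Lf n D (p - q) = Lf n D p - Lf n D q"
  by (simp add: Lf_def sum_subtractf algebra_simps)

lemma Lf_zero: "Lf n D 0 = 0" "Lf n D (\<lambda>a. 0) = 0"
  by (simp_all add: Lf_def)

lemma Lf_ev: "i < n \<Longrightarrow> Lf n D (ev (i, b)) = (if b then - int (D i) else int (D i))"
  by (simp add: Lf_def ev_def if_distrib[of "\<lambda>x. _ * x"] cong: if_cong)

definition Zt :: "'a::field \<Rightarrow> (nat \<Rightarrow> nat) \<Rightarrow> (nat \<Rightarrow> 'a) \<Rightarrow> nat \<Rightarrow> 'a^2^2" where
  "Zt T D \<beta> i = mk (T powi int (D i)) (\<beta> i) 0 (T powi (- int (D i)))"

definition tm :: "'a::field \<Rightarrow> nat \<Rightarrow> (nat \<Rightarrow> nat) \<Rightarrow> (nat \<Rightarrow> 'a) \<Rightarrow> ((nat \<Rightarrow> int) \<times> nat) \<times> bool \<Rightarrow> 'a" where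
  "tm T n D \<beta> e = (if snd e then -1 else 1) * \<beta> (snd (fst e)) * T powi (- int (D (snd (fst e))) - 2 * Lf n D (fst (fst e)))"

lemma pw: "(T::'a::field) \<noteq> 0 \<Longrightarrow> T powi a * T powi b = T powi (a + b)"
  by (simp add: power_int_add)

lemma Zt_SL2: "(T::'a::field) \<noteq> 0 \<Longrightarrow> Zt T D \<beta> i \<in> SL2"
  by (simp add: Zt_def SL2_def det_mk power_int_minus)

lemma word_map_Cons: "word_map (x # u) Z = (if snd x then matrix_inv (Z (fst x)) else Z (fst x)) ** word_map u Z"
  by (simp add: word_map_def)

lemma word_map_Nil: "word_map [] Z = mat 1"
  by (simp add: word_map_def)

lemma eval_tri:
  fixes T :: "'a::field"
  assumes T: "T \<noteq> 0" and u: "\<forall>x\<in>set u. fst x < n"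
  shows "word_map u (Zt T D \<beta>) = mk (T powi Lf n D (sig u)) (T powi Lf n D (sig u) * sum_list (map (tm T n D \<beta>) (items u))) 0 (T powi (- Lf n D (sig u)))"
  using u
proof (induction u)
  case Nil
  then show ?case by (simp add: word_map_Nil Lf_zero mat1_mk)
next
  case (Cons x u)
  obtain i b where x: "x = (i, b)" by (cases x)
  have i: "i < n" using Cons.prems x by simp
  define L where "L = Lf n D (sig u)"
  define S where "S = sum_list (map (tm T n D \<beta>) (items u))"
  define d where "d = int (D i)"
  have IH: "word_map u (Zt T D \<beta>) = mk (T powi L) (T powi L * S) 0 (T powi (- L))"
    using Cons by (simp add: L_def S_def)
  show ?case
  proof (cases b)
    case False
    have Lx: "Lf n D (sig (x # u)) = d + L" using x False i by (simp add: sig_Cons Lf_add Lf_ev L_def d_def)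
    have Sx: "sum_list (map (tm T n D \<beta>) (items (x # u))) = \<beta> i * T powi (- d - 2 * L) + S"
      using x False by (simp add: tm_def S_def L_def d_def)
    have e1: "T powi d * T powi L = T powi (d + L)" using T by (simp add: pw)
    have e2: "T powi (- d) * T powi (- L) = T powi (- (d + L))" using T by (simp add: pw)
    have e3: "T powi d * (T powi L * S) + \<beta> i * T powi (- L) = T powi (d + L) * (\<beta> i * T powi (- d - 2 * L) + S)"
    proof -
      have "T powi (d + L) * T powi (- d - 2 * L) = T powi (- L)" using T by (simp add: pw)
      then show ?thesis using e1 by (simp add: algebra_simps)
    qed
    have "word_map (x # u) (Zt T D \<beta>) = Zt T D \<beta> i ** word_map u (Zt T D \<beta>)"
      using x False by (simp add: word_map_Cons)
    also have "\<dots> = mk (T powi d) (\<beta> i) 0 (T powi (-d)) ** mk (T powi L) (T powi L * S) 0 (T powi (- L))"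
      unfolding IH by (simp only: Zt_def d_def)
    also have "\<dots> = mk (T powi (d + L)) (T powi (d + L) * (\<beta> i * T powi (- d - 2 * L) + S)) 0 (T powi (- (d + L)))"
      by (simp only: mk_mult e1 e2 e3 mult_zero_right mult_zero_left add_0_right add_0_left)
    finally show ?thesis by (simp only: Lx Sx)
  next
    case True
    have Lx: "Lf n D (sig (x # u)) = L - d" using x True i by (simp add: sig_Cons Lf_add Lf_ev L_def d_def)
    have Sx: "sum_list (map (tm T n D \<beta>) (items (x # u))) = - (\<beta> i * T powi (- d - 2 * (L - d))) + S"
      using x True i by (simp add: tm_def S_def L_def d_def Lf_diff Lf_ev)
    have "matrix_inv (Zt T D \<beta> i) = mk (T powi (- d)) (- \<beta> i) (- 0) (T powi d)"
      unfolding Zt_def d_def by (rule matrix_inv_mk) (simp add: T power_int_minus)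
    then have inv: "matrix_inv (Zt T D \<beta> i) = mk (T powi (- d)) (- \<beta> i) 0 (T powi d)" by simp
    have e1: "T powi (- d) * T powi L = T powi (L - d)" using T by (simp add: pw)
    have e2: "T powi d * T powi (- L) = T powi (- (L - d))" using T by (simp add: pw)
    have e3: "T powi (- d) * (T powi L * S) + - \<beta> i * T powi (- L) = T powi (L - d) * (- (\<beta> i * T powi (- d - 2 * (L - d))) + S)"
    proof -
      have "T powi (L - d) * T powi (- d - 2 * (L - d)) = T powi (- L)" using T by (simp add: pw)
      then show ?thesis using e1 by (simp add: algebra_simps)
    qed
    have "word_map (x # u) (Zt T D \<beta>) = matrix_inv (Zt T D \<beta> i) ** word_map u (Zt T D \<beta>)"
      using x True by (simp add: word_map_Cons)
    also have "\<dots> = mk (T powi (- d)) (- \<beta> i) 0 (T powi d) ** mk (T powi L) (T powi L * S) 0 (T powi (- L))"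
      unfolding IH inv ..
    also have "\<dots> = mk (T powi (L - d)) (T powi (L - d) * (- (\<beta> i * T powi (- d - 2 * (L - d))) + S)) 0 (T powi (- (L - d)))"
      by (simp only: mk_mult e1 e2 e3 mult_zero_right mult_zero_left add_0_right add_0_left)
    finally show ?thesis by (simp only: Lx Sx)
  qed
qed




lemma sig_bound: "\<bar>sig u j\<bar> \<le> int (length u)"
proof (induction u)
  case Nil then show ?case by simp
next
  case (Cons x u)
  have "\<bar>ev x j\<bar> \<le> 1" by (simp add: ev_def)
  then show ?case using Cons by (simp add: sig_Cons)
qed

lemma items_bound: "((q, i), s) \<in> set (items u) \<Longrightarrow> \<bar>q j\<bar> \<le> int (length u)"
proof (induction u)
  case Nil then show ?case by simp
next
  case (Cons x u)
  have "\<bar>sig u j\<bar> \<le> int (length u)" by (rule sig_bound)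
  moreover have "\<bar>ev x j\<bar> \<le> 1" "\<bar>ev (fst x, False) j\<bar> \<le> 1" by (simp_all add: ev_def)
  ultimately show ?case using Cons by (auto split: if_splits)
qed

lemma digits_bound:
  fixes B :: int
  assumes B: "B \<ge> 1" and d: "\<forall>j<m. \<bar>d j\<bar> \<le> B - 1"
  shows "\<bar>\<Sum>j<m. B^j * d j\<bar> \<le> B^m - 1"
  using d
proof (induction m)
  case 0 then show ?case by simp
next
  case (Suc m)
  have a: "\<bar>\<Sum>j<m. B^j * d j\<bar> \<le> B^m - 1" using Suc.IH Suc.prems by simp
  have p: "B^m \<ge> 0" using B by simp
  have "\<bar>d m\<bar> \<le> B - 1" using Suc.prems by simp
  then have b: "\<bar>B^m * d m\<bar> \<le> B^m * (B - 1)"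
    using p by (simp add: abs_mult mult_left_mono)
  have s: "(\<Sum>j<Suc m. B^j * d j) = (\<Sum>j<m. B^j * d j) + B^m * d m"
    by (rule sum.lessThan_Suc)
  have "\<bar>\<Sum>j<Suc m. B^j * d j\<bar> \<le> \<bar>\<Sum>j<m. B^j * d j\<bar> + \<bar>B^m * d m\<bar>"
    unfolding s by (rule abs_triangle_ineq)
  also have "\<dots> \<le> (B^m - 1) + B^m * (B - 1)" using a b by linarith
  also have "\<dots> = B^Suc m - 1" by (simp add: algebra_simps)
  finally show ?case .
qed

lemma digits_zero:
  fixes B :: int
  assumes B: "B \<ge> 1" and d: "\<forall>j<m. \<bar>d j\<bar> \<le> B - 1" and z: "(\<Sum>j<m. B^j * d j) = 0"
  shows "\<forall>j<m. d j = 0"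
  using d z
proof (induction m)
  case 0 then show ?case by simp
next
  case (Suc m)
  have dm': "\<forall>j<m. \<bar>d j\<bar> \<le> B - 1" using Suc.prems(1) by simp
  have a: "\<bar>\<Sum>j<m. B^j * d j\<bar> \<le> B^m - 1" using digits_bound[OF B dm'] .
  have s: "(\<Sum>j<Suc m. B^j * d j) = (\<Sum>j<m. B^j * d j) + B^m * d m"
    by (rule sum.lessThan_Suc)
  have eq: "B^m * d m = - (\<Sum>j<m. B^j * d j)" using Suc.prems(2) unfolding s by linarith
  have dm: "d m = 0"
  proof (rule ccontr)
    assume "d m \<noteq> 0"
    then have "\<bar>d m\<bar> \<ge> 1" by linarith
    moreover have "B^m > 0" using B by simp
    ultimately have "\<bar>B^m\<bar> * \<bar>d m\<bar> \<ge> B^m" by (simp add: mult_left_mono[of 1, simplified])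
    then have "\<bar>B^m * d m\<bar> \<ge> B^m" by (simp only: abs_mult)
    then show False using a eq by simp
  qed
  then have "(\<Sum>j<m. B^j * d j) = 0" using eq by simp
  then have "\<forall>j<m. d j = 0" using Suc.IH dm' by blast
  then show ?case using dm less_Suc_eq by auto
qed


lemma Lf_inj:
  fixes R :: int
  assumes sq: "supp n q" and sq': "supp n q'" and bq: "\<forall>j. \<bar>q j\<bar> \<le> R" and bq': "\<forall>j. \<bar>q' j\<bar> \<le> R"
    and R: "R \<ge> 0" and eq: "Lf n (\<lambda>j. nat (2*R+1)^j) q = Lf n (\<lambda>j. nat (2*R+1)^j) q'"
  shows "q = q'"
proof -
  define B where "B = 2*R+1"
  have B: "B \<ge> 1" using R by (simp add: B_def)
  have "Lf n (\<lambda>j. nat (2*R+1)^j) (q - q') = 0" using eq by (simp add: Lf_diff)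
  then have z: "(\<Sum>j<n. B^j * (q - q') j) = 0"
    using R by (simp add: Lf_def B_def of_nat_power)
  have "\<forall>j<n. \<bar>(q - q') j\<bar> \<le> B - 1"
  proof (intro allI impI)
    fix j
    have "\<bar>q j\<bar> \<le> R" "\<bar>q' j\<bar> \<le> R" using bq bq' by auto
    then show "\<bar>(q - q') j\<bar> \<le> B - 1" by (simp add: B_def)
  qed
  then have "\<forall>j<n. (q - q') j = 0" using digits_zero[OF B _ z] by blast
  then show ?thesis using sq sq' unfolding supp_def fun_eq_iff
    by (metis fun_diff_def eq_iff_diff_eq_0 not_less)
qed

lemma Lf_bound:
  fixes R :: int
  assumes "\<forall>j. \<bar>q j\<bar> \<le> R"
  shows "\<bar>Lf n D q\<bar> \<le> (\<Sum>j<n. int (D j) * R)"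
proof -
  have "\<bar>Lf n D q\<bar> \<le> (\<Sum>j<n. \<bar>int (D j) * q j\<bar>)" unfolding Lf_def by (rule sum_abs)
  also have "\<dots> \<le> (\<Sum>j<n. int (D j) * R)"
  proof (rule sum_mono)
    fix j
    have "\<bar>q j\<bar> \<le> R" using assms by auto
    then show "\<bar>int (D j) * q j\<bar> \<le> int (D j) * R" by (simp add: abs_mult mult_left_mono)
  qed
  finally show ?thesis .
qed

definition cc :: "nat \<Rightarrow> ((nat \<Rightarrow> int) \<times> nat) \<times> bool \<Rightarrow> int" where
  "cc i0 e = (if snd (fst e) = i0 then (if snd e then -1 else 1) else 0)"

lemma poly_eq:
  fixes T :: "'a::field"
  assumes T: "T \<noteq> 0" and bd: "\<forall>e\<in>set L. \<bar>Lf n D (fst (fst e))\<bar> \<le> C"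
  shows "poly (sum_list (map (\<lambda>e. monom (of_int (cc i0 e)) (nat (2*C - 2*Lf n D (fst (fst e))))) L)) T
       = T powi (int (D i0) + 2*C) * sum_list (map (tm T n D (\<lambda>j. if j = i0 then 1 else 0)) L)"
  using bd
proof (induction L)
  case Nil then show ?case by simp
next
  case (Cons e L)
  obtain q i s where e: "e = ((q, i), s)" by (metis prod.collapse)
  have b: "\<bar>Lf n D q\<bar> \<le> C" using Cons.prems e by simp
  have IH: "poly (sum_list (map (\<lambda>e. monom (of_int (cc i0 e)) (nat (2*C - 2*Lf n D (fst (fst e))))) L)) T
       = T powi (int (D i0) + 2*C) * sum_list (map (tm T n D (\<lambda>j. if j = i0 then 1 else 0)) L)"
    using Cons by simp
  have single: "poly (monom (of_int (cc i0 e)) (nat (2*C - 2*Lf n D q))) T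
       = T powi (int (D i0) + 2*C) * tm T n D (\<lambda>j. if j = i0 then 1 else 0) e"
  proof (cases "i = i0")
    case True
    have nn: "2*C - 2*Lf n D q \<ge> 0" using b by linarith
    have "T powi (int (D i0) + 2*C) * T powi (- int (D i0) - 2 * Lf n D q) = T powi (2*C - 2*Lf n D q)"
      using T by (simp add: pw)
    also have "\<dots> = T ^ nat (2*C - 2*Lf n D q)"
      using nn by (metis int_nat_eq power_int_of_nat)
    finally have "T powi (int (D i0) + 2*C) * T powi (- int (D i0) - 2 * Lf n D q) = T ^ nat (2*C - 2*Lf n D q)" .
    then show ?thesis using True e
      by (auto simp: cc_def tm_def poly_monom)
  next
    case False
    then show ?thesis using e by (simp add: cc_def tm_def poly_monom)
  qed
  show ?case using IH single e by (simp add: algebra_simps)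
qed

lemma coeff_sum_eq:
  "coeff (sum_list (map (\<lambda>e. monom (of_int (f e)) (g e)) L)) k = (of_int (sum_list (map (\<lambda>e. if g e = k then f e else 0) L)) :: 'a::comm_ring_1)"
  by (induction L) auto

lemma count_sum:
  "sum_list (map (\<lambda>e. if fst e = e0 then (if snd e then -1 else 1) else (0::int)) L)
     = int (count (mset (map fst (filter (\<lambda>p. \<not> snd p) L))) e0) - int (count (mset (map fst (filter snd L))) e0)"
  by (induction L) auto


lemma nonvanish:
  assumes u: "\<forall>x\<in>set u. fst x < n" and nb: "\<not> bal (items u)"
  shows "\<exists>T D \<beta>. T \<noteq> (0::'a::field_char_0) \<and> sum_list (map (tm T n D \<beta>) (items u)) \<noteq> 0"
proof -
  define L where "L = items u"
  obtain e0 where e0: "count (mset (map fst (filter snd L))) e0 \<noteq> count (mset (map fst (filter (\<lambda>p. \<not> snd p) L))) e0"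
    using nb unfolding bal_def L_def multiset_eq_iff by blast
  obtain q0 i0 where e0q: "e0 = (q0, i0)" by (cases e0)
  have "e0 \<in> set (map fst L)"
  proof (rule ccontr)
    assume "e0 \<notin> set (map fst L)"
    then have "count (mset (map fst (filter snd L))) e0 = 0" "count (mset (map fst (filter (\<lambda>p. \<not> snd p) L))) e0 = 0"
      by (auto simp: count_eq_zero_iff)
    then show False using e0 by simp
  qed
  then obtain s0 where s0: "((q0, i0), s0) \<in> set L" using e0q by auto
  define R where "R = int (length u)"
  define D where "D = (\<lambda>j. nat (2*R+1)^j)"
  define C where "C = (\<Sum>j<n. int (D j) * R)"
  define ex where "ex = (\<lambda>q. nat (2*C - 2*Lf n D q))"
  have props: "supp n q \<and> (\<forall>j. \<bar>q j\<bar> \<le> R)" if "((q, i), s) \<in> set L" for q i s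
    using that items_supp[OF u] items_bound unfolding L_def R_def by blast
  have R0: "R \<ge> 0" by (simp add: R_def)
  have bdL: "\<forall>e\<in>set L. \<bar>Lf n D (fst (fst e))\<bar> \<le> C"
  proof
    fix e assume "e \<in> set L"
    then obtain q i s where "e = ((q, i), s)" "((q, i), s) \<in> set L" by (metis prod.collapse)
    then show "\<bar>Lf n D (fst (fst e))\<bar> \<le> C" using props Lf_bound unfolding C_def by simp
  qed
  have exinj: "q = q0" if "((q, i), s) \<in> set L" "ex q = ex q0" for q i s
  proof -
    have b1: "\<bar>Lf n D q\<bar> \<le> C" using bdL that(1) by fastforce
    have b2: "\<bar>Lf n D q0\<bar> \<le> C" using bdL s0 by fastforce
    have "Lf n D q = Lf n D q0" using that(2) b1 b2 unfolding ex_def by (simp add: nat_eq_iff2 split: if_splits)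
    then show ?thesis using Lf_inj[of n q q0 R] props[OF that(1)] props[OF s0] R0 unfolding D_def by blast
  qed
  define P :: "'a poly" where "P = sum_list (map (\<lambda>e. monom (of_int (cc i0 e)) (ex (fst (fst e)))) L)"
  have "coeff P (ex q0) = of_int (sum_list (map (\<lambda>e. if ex (fst (fst e)) = ex q0 then cc i0 e else 0) L))"
    unfolding P_def by (rule coeff_sum_eq)
  also have "sum_list (map (\<lambda>e. if ex (fst (fst e)) = ex q0 then cc i0 e else 0) L)
      = sum_list (map (\<lambda>e. if fst e = e0 then (if snd e then -1 else 1) else (0::int)) L)"
  proof (rule arg_cong[where f = sum_list], rule map_cong[OF refl])
    fix e assume "e \<in> set L"
    then obtain q i s where e: "e = ((q, i), s)" "((q, i), s) \<in> set L" by (metis prod.collapse)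
    show "(if ex (fst (fst e)) = ex q0 then cc i0 e else 0) = (if fst e = e0 then (if snd e then -1 else 1) else 0)"
      using exinj[OF e(2)] e e0q by (auto simp: cc_def)
  qed
  also have "\<dots> = int (count (mset (map fst (filter (\<lambda>p. \<not> snd p) L))) e0) - int (count (mset (map fst (filter snd L))) e0)"
    by (rule count_sum)
  finally have "coeff P (ex q0) \<noteq> 0" using e0 by simp
  then have P0: "P \<noteq> 0" by auto
  have "finite (insert 0 {x. poly P x = 0})" using poly_roots_finite[OF P0] by simp
  then obtain T :: 'a where T: "T \<notin> insert 0 {x. poly P x = 0}"
    using ex_new_if_finite[OF infinite_UNIV_char_0] by blast
  have "poly P T = T powi (int (D i0) + 2*C) * sum_list (map (tm T n D (\<lambda>j. if j = i0 then 1 else 0)) L)"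
    unfolding P_def ex_def using poly_eq[of T L n D C i0] T bdL by simp
  then have "sum_list (map (tm T n D (\<lambda>j. if j = i0 then 1 else 0)) L) \<noteq> 0" using T by auto
  then show ?thesis using T unfolding L_def by blast
qed




lemma invertible_inv_props:
  fixes A :: "'a::semiring_1^'n^'n"
  assumes "invertible A"
  shows "A ** matrix_inv A = mat 1 \<and> matrix_inv A ** A = mat 1"
  using assms unfolding invertible_def matrix_inv_def by (rule someI_ex)

lemma SL2_inv_props:
  fixes A :: "'a::field^2^2"
  assumes "A \<in> SL2"
  shows "A ** matrix_inv A = mat 1 \<and> matrix_inv A ** A = mat 1"
  using assms by (intro invertible_inv_props) (simp add: invertible_det_nz SL2_def)

lemma word_map_conj:
  fixes Q Qi :: "'a::field^2^2"
  assumes Z: "\<forall>i. Z i \<in> SL2" and Q1: "Q ** Qi = mat 1" and Q2: "Qi ** Q = mat 1"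
  shows "word_map u (\<lambda>i. Q ** Z i ** Qi) = Q ** word_map u Z ** Qi"
proof (induction u)
  case Nil
  then show ?case using Q1 by (simp add: word_map_Nil matrix_mul_rid)
next
  case (Cons x u)
  define W where "W = word_map u Z"
  define Y where "Y = (if snd x then matrix_inv (Z (fst x)) else Z (fst x))"
  have Yc: "(if snd x then matrix_inv (Q ** Z (fst x) ** Qi) else Q ** Z (fst x) ** Qi) = Q ** Y ** Qi"
  proof (cases "snd x")
    case True
    let ?A = "Z (fst x)"
    have p: "?A ** matrix_inv ?A = mat 1" "matrix_inv ?A ** ?A = mat 1" using SL2_inv_props Z by blast+
    have "(Q ** ?A ** Qi) ** (Q ** matrix_inv ?A ** Qi) = Q ** (?A ** (Qi ** Q) ** matrix_inv ?A) ** Qi"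
      by (simp add: matrix_mul_assoc)
    also have "\<dots> = mat 1" using p Q1 Q2 by (simp add: matrix_mul_rid matrix_mul_lid)
    finally have 1: "(Q ** ?A ** Qi) ** (Q ** matrix_inv ?A ** Qi) = mat 1" .
    have "(Q ** matrix_inv ?A ** Qi) ** (Q ** ?A ** Qi) = Q ** (matrix_inv ?A ** (Qi ** Q) ** ?A) ** Qi"
      by (simp add: matrix_mul_assoc)
    also have "\<dots> = mat 1" using p Q1 Q2 by (simp add: matrix_mul_rid matrix_mul_lid)
    finally have 2: "(Q ** matrix_inv ?A ** Qi) ** (Q ** ?A ** Qi) = mat 1" .
    show ?thesis using True matrix_inv_eq[OF 1 2] by (simp add: Y_def)
  next
    case False then show ?thesis by (simp add: Y_def)
  qed
  have "word_map (x # u) (\<lambda>i. Q ** Z i ** Qi) = (Q ** Y ** Qi) ** (Q ** W ** Qi)"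
    using Cons Yc by (simp add: word_map_Cons W_def)
  also have "\<dots> = Q ** (Y ** (Qi ** Q) ** W) ** Qi" by (simp add: matrix_mul_assoc)
  also have "\<dots> = Q ** (Y ** W) ** Qi" using Q2 by (simp add: matrix_mul_rid)
  also have "Y ** W = word_map (x # u) Z" by (simp add: word_map_Cons Y_def W_def)
  finally show ?case .
qed

lemma conj_SL2:
  fixes Q Qi A :: "'a::field^2^2"
  assumes "A \<in> SL2" "Q ** Qi = mat 1"
  shows "Q ** A ** Qi \<in> SL2"
proof -
  have "det Q * det Qi = 1" using assms(2) det_mul[of Q Qi] by simp
  then show ?thesis using assms(1) by (simp add: SL2_def det_mul algebra_simps)
qed

lemma word_map_one: "word_map u (\<lambda>i. mat 1 :: 'a::field^2^2) = mat 1"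
proof (induction u)
  case Nil then show ?case by (simp add: word_map_Nil)
next
  case (Cons x u)
  have "matrix_inv (mat 1 :: 'a^2^2) = mat 1" by (rule matrix_inv_eq) (simp_all add: matrix_mul_lid)
  then show ?case using Cons by (simp add: word_map_Cons matrix_mul_lid)
qed


lemma unip_facts:
  fixes X :: "'a::field^2^2"
  assumes S: "X \<in> SL2" and U: "unipotent X"
  shows "X$1$1 + X$2$2 = 2 \<and> (X$1$1 - 1)^2 + X$1$2 * X$2$1 = 0"
proof -
  define N where "N = X - mat 1"
  obtain k where k: "((\<lambda>M. N ** M) ^^ k) (mat 1) = 0" using U unfolding unipotent_def N_def by blast
  have dk: "det (((\<lambda>M. N ** M) ^^ j) (mat 1)) = det N ^ j" for j
    by (induction j) (simp_all add: det_mul)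
  have "det (0::'a^2^2) = 0" by (simp add: det_2)
  then have "det N ^ k = 0" using dk[of k] k by simp
  then have dN: "det N = 0" by simp
  have e: "N$1$1 = X$1$1 - 1" "N$1$2 = X$1$2" "N$2$1 = X$2$1" "N$2$2 = X$2$2 - 1"
    by (simp_all add: N_def mat_def)
  have d1: "(X$1$1 - 1) * (X$2$2 - 1) - X$1$2 * X$2$1 = 0" using dN by (simp add: det_2 e)
  have d2: "X$1$1 * X$2$2 - X$1$2 * X$2$1 = 1" using S by (simp add: SL2_def det_2)
  have t: "X$1$1 + X$2$2 = 2" using d1 d2 by (simp add: algebra_simps)
  have "(X$1$1 - 1)^2 + X$1$2 * X$2$1 = 0" using d2 t by algebra
  with t show ?thesis by simp
qed

lemma unip_conj:
  fixes X :: "'a::field^2^2" and c :: 'a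
  assumes S: "X \<in> SL2" and U: "unipotent X" and X1: "X \<noteq> mat 1" and c: "c \<noteq> 0"
  shows "\<exists>Q Qi. Q ** Qi = mat 1 \<and> Qi ** Q = mat 1 \<and> Q ** mk 1 c 0 1 ** Qi = X"
proof -
  define p where "p = X$1$1 - 1"
  define b where "b = X$1$2"
  define r where "r = X$2$1"
  have F: "X$1$1 + X$2$2 = 2" "p^2 + b * r = 0" using unip_facts[OF S U] by (simp_all add: p_def b_def r_def)
  have X: "X = mk (1 + p) b r (1 - p)"
    using F(1) by (simp add: mat_eq_2 p_def b_def r_def algebra_simps)
  show ?thesis
  proof (cases "b = 0")
    case False
    define Q where "Q = mk (b/c) 0 (-p/c) 1"
    define Qi where "Qi = mk (c/b) 0 (p/b) (1::'a)"
    have "b * r = - (p * p)" using F(2) by algebra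
    then have r: "r = - (p * p) / b" using False by (simp add: field_simps)
    have "Q ** Qi = mat 1" using False c by (simp add: Q_def Qi_def mk_mult mat1_mk mk_eq field_simps)
    moreover have "Qi ** Q = mat 1" using False c by (simp add: Q_def Qi_def mk_mult mat1_mk mk_eq field_simps)
    moreover have "Q ** mk 1 c 0 1 ** Qi = X"
      unfolding X using False c r by (simp add: Q_def Qi_def mk_mult mk_eq field_simps)
    ultimately show ?thesis by blast
  next
    case True
    then have "p^2 = 0" using F(2) by simp
    then have p0: "p = 0" by simp
    have r0: "r \<noteq> 0"
    proof
      assume "r = 0"
      then have "X = mat 1" using X True p0 by (simp add: mat1_mk)
      then show False using X1 by simp
    qed
    define Q where "Q = mk 0 1 (r/c) (0::'a)"
    define Qi where "Qi = mk 0 (c/r) 1 (0::'a)"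
    have "Q ** Qi = mat 1" using r0 c by (simp add: Q_def Qi_def mk_mult mat1_mk mk_eq)
    moreover have "Qi ** Q = mat 1" using r0 c by (simp add: Q_def Qi_def mk_mult mat1_mk mk_eq)
    moreover have "Q ** mk 1 c 0 1 ** Qi = X"
      unfolding X using True p0 r0 c by (simp add: Q_def Qi_def mk_mult mk_eq)
    ultimately show ?thesis by blast
  qed
qed


theorem corollary5p3:
  fixes n :: nat and w :: "letter list" and X :: "'a::field_char_0 ^ 2 ^ 2"
  assumes "n \<ge> 2"
    and "w \<in> derived (free_grp n) (carrier (free_grp n))"
    and "w \<notin> derived (free_grp n) (derived (free_grp n) (carrier (free_grp n)))"
    and "X \<in> SL2" and "unipotent X"
  shows "\<exists>Z. (\<forall>i<n. Z i \<in> SL2) \<and> word_map w Z = X"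
proof (cases "X = mat 1")
  case True
  have "(mat 1 :: 'a^2^2) \<in> SL2" by (simp add: SL2_def)
  have "word_map w (\<lambda>i. mat 1 :: 'a^2^2) = mat 1" by (rule word_map_one)
  then show ?thesis using True \<open>mat 1 \<in> SL2\<close> by (intro exI[of _ "\<lambda>i. mat 1"]) simp
next
  case False
  interpret group "free_grp n" by (rule free_group)
  have wc: "w \<in> carrier (free_grp n)" using assms(2) derived_in_carrier[of "carrier (free_grp n)"] by blast
  have nb: "\<not> bal (items w)" and sw: "sig w = 0" using key_group[OF wc assms(2,3)] by blast+
  have l: "\<forall>x\<in>set w. fst x < n" using wc by (simp add: free_carrier)
  obtain T :: 'a and D \<beta> where T: "T \<noteq> 0" and S: "sum_list (map (tm T n D \<beta>) (items w)) \<noteq> 0"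
    using nonvanish[OF l nb] by blast
  define c where "c = sum_list (map (tm T n D \<beta>) (items w))"
  have W: "word_map w (Zt T D \<beta>) = mk 1 c 0 1"
    using eval_tri[OF T l, of D \<beta>] sw by (simp add: Lf_zero c_def)
  have cne: "c \<noteq> 0" using S by (simp add: c_def)
  obtain Q Qi where Q: "Q ** Qi = mat 1" "Qi ** Q = mat 1" "Q ** mk 1 c 0 1 ** Qi = X"
    using unip_conj[OF assms(4,5) False cne] by blast
  have ZS: "\<forall>i. Zt T D \<beta> i \<in> SL2" using Zt_SL2[OF T] by blast
  have "word_map w (\<lambda>i. Q ** Zt T D \<beta> i ** Qi) = Q ** word_map w (Zt T D \<beta>) ** Qi"
    by (rule word_map_conj[OF ZS Q(1,2)])
  also have "\<dots> = Q ** mk 1 c 0 1 ** Qi" by (simp only: W)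
  also have "\<dots> = X" by (rule Q(3))
  finally have "word_map w (\<lambda>i. Q ** Zt T D \<beta> i ** Qi) = X" .
  moreover have "\<forall>i<n. Q ** Zt T D \<beta> i ** Qi \<in> SL2"
  proof (intro allI impI)
    fix i show "Q ** Zt T D \<beta> i ** Qi \<in> SL2" using ZS conj_SL2[OF _ Q(1)] by blast
  qed
  ultimately show ?thesis by (intro exI[of _ "\<lambda>i. Q ** Zt T D \<beta> i ** Qi"] conjI)
qed


end
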